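(* Let $$F(x)=\sum_{n\ge0}t^n\sum_{(P,Q)\in\mathcal{I}_n}x^{\mathrm{contact}(P)},\qquad H(x)\equiv H(t,x,s)=\sum_{n\ge0}t^n\sum_{(P,Q)\in\mathcal{I}_n}x^{\mathrm{contact}(P)}\sum_{i=0}^{2n}s^{Q(i)},$$ and write $F(1),H(1)$ for their specializations at $x=1$. Then $$H(x)=F(x)+sxtF(x)\frac{H(x)-H(1)}{x-1}+xtH(x)\frac{F(x)-F(1)}{x-1}.$$
   Context: A Dyck path of size $n$ is a lattice path from $(0,0)$ to $(2n,0)$ with $n$ up-steps $(1,1)$ and $n$ down-steps $(1,-1)$ never going below height $0$; $\mathcal{D}_n$ is their set; $Q(i)$ denotes the height of $Q$ at abscissa $i$. A contact of a path is a vertex of the path lying on the $x$-axis (including both endpoints); $\mathrm{contact}(P)$ is the number of contacts of $P$. The Tamari order on $\mathcal{D}_n$ is the reflexive transitive closure of the relation: if $P$ has a down-step $d$ immediately followed by an up-step and $\mathfrak{e}$ is the shortest excursion following $d$ (a subpath staying strictly above its starting height except at its last point), the path obtained by exchanging $d$ and $\mathfrak{e}$ is larger than $P$. $\mathcal{I}_n$ is the set of pairs $(P,Q)\in\mathcal{D}_n^2$ with $P\le Q$ (Tamari intervals; $P$ lower path, $Q$ upper path). The series are formal power series in $t$. *)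

theory Defs
  imports "HOL-Computational_Algebra.Formal_Power_Series"
begin

text \<open>A lattice path is a list of steps: True = up-step (1,1), False = down-step (1,-1).\<close>

definition height :: "bool list \<Rightarrow> nat \<Rightarrow> int" where
  "height w i = int (length (filter id (take i w))) - int (length (filter Not (take i w)))"

definition dyck :: "nat \<Rightarrow> bool list set" where
  "dyck n = {w. length w = 2 * n \<and> height w (2 * n) = 0 \<and> (\<forall>i \<le> 2 * n. height w i \<ge> 0)}"

definition excursion :: "bool list \<Rightarrow> bool" where
  "excursion e \<longleftrightarrow> e \<noteq> [] \<and> height e (length e) = 0 \<and>
     (\<forall>i. 0 < i \<and> i < length e \<longrightarrow> height e i > 0)"

text \<open>Covering-type step of the Tamari order: a down-step d followed by an up-step, and the
  excursion e following d, are exchanged.\<close>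
definition tamari_step :: "bool list \<Rightarrow> bool list \<Rightarrow> bool" where
  "tamari_step P Q \<longleftrightarrow> (\<exists>u e v. excursion e \<and> P = u @ [False] @ e @ v \<and> Q = u @ e @ [False] @ v)"

definition tamari_le :: "bool list \<Rightarrow> bool list \<Rightarrow> bool" where
  "tamari_le = tamari_step\<^sup>*\<^sup>*"

definition tamari_intervals :: "nat \<Rightarrow> (bool list \<times> bool list) set" where
  "tamari_intervals n = {(P, Q). P \<in> dyck n \<and> Q \<in> dyck n \<and> tamari_le P Q}"

definition contact :: "bool list \<Rightarrow> nat" where
  "contact P = card {i. i \<le> length P \<and> height P i = 0}"

definition F_gf :: "real \<Rightarrow> real fps" where
  "F_gf x = Abs_fps (\<lambda>n. \<Sum>(P, Q)\<in>tamari_intervals n. x ^ contact P)"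

definition H_gf :: "real \<Rightarrow> real \<Rightarrow> real fps" where
  "H_gf x s = Abs_fps (\<lambda>n. \<Sum>(P, Q)\<in>tamari_intervals n.
      x ^ contact P * (\<Sum>i = 0..2 * n. s ^ nat (height Q i)))"

end

theory Submission
  imports Defs
begin


lemma height_0[simp]: "height w 0 = 0"
  by (simp add: height_def)

lemma height_Nil[simp]: "height [] i = 0"
  by (simp add: height_def)

lemma height_Cons_Suc[simp]: "height (a # w) (Suc i) = (if a then 1 else -1) + height w i"
  by (cases a) (simp_all add: height_def)

lemma height_Cons: "height (a # w) i = (if i = 0 then 0 else (if a then 1 else -1) + height w (i - 1))"
  by (cases i) simp_all

lemma height_ge: "length w \<le> i \<Longrightarrow> height w i = height w (length w)"
  by (simp add: height_def)

lemma height_append: "height (xs @ ys) i =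
  (if i \<le> length xs then height xs i else height xs (length xs) + height ys (i - length xs))"
  by (auto simp add: height_def)

lemma height_snoc_last: "height (xs @ [a]) (Suc (length xs)) = height xs (length xs) + (if a then 1 else -1)"
  by (simp add: height_append)

definition bal :: "bool list \<Rightarrow> bool" where
  "bal w \<longleftrightarrow> height w (length w) = 0 \<and> (\<forall>i \<le> length w. height w i \<ge> 0)"

lemma bal_nonneg: "bal w \<Longrightarrow> height w i \<ge> 0"
  unfolding bal_def by (metis height_ge nat_le_linear order_refl)

lemma bal_Nil[simp]: "bal []" by (simp add: bal_def)

lemma bal_append: assumes "bal a" "bal b" shows "bal (a @ b)"
  unfolding bal_def
proof
  show "height (a @ b) (length (a @ b)) = 0" using assms unfolding bal_def
    by (simp add: height_append)
  show "\<forall>i\<le>length (a @ b). 0 \<le> height (a @ b) i"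
    using bal_nonneg[OF assms(1)] bal_nonneg[OF assms(2)] assms(1) unfolding bal_def
    by (simp add: height_append)
qed

lemma height_wrap: "height (True # a @ [False]) i =
  (if i = 0 then 0 else if i \<le> Suc (length a) then 1 + height a (i - 1) else height a (length a))"
  by (cases i) (auto simp: height_append height_Cons)

lemma bal_wrap: assumes "bal a" shows "bal (True # a @ [False])"
  unfolding bal_def height_wrap using assms bal_nonneg[OF assms] unfolding bal_def
  by simp

lemma bal_split: assumes "bal (a @ b)" "height a (length a) = 0" shows "bal a \<and> bal b"
proof -
  have n: "\<And>i. height (a @ b) i \<ge> 0" using bal_nonneg[OF assms(1)] .
  have "bal a" unfolding bal_def
  proof (intro conjI allI impI)
    fix i assume "i \<le> length a" then show "height a i \<ge> 0"
      using n[of i] by (simp add: height_append)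
  qed (fact assms(2))
  moreover have "bal b" unfolding bal_def
  proof (intro conjI allI impI)
    show "height b (length b) = 0" using assms unfolding bal_def
      by (cases "b = []") (simp_all add: height_append)
    fix i assume "i \<le> length b" then show "height b i \<ge> 0"
      using n[of "length a + i"] assms(2) by (cases "i = 0") (simp_all add: height_append)
  qed
  ultimately show ?thesis ..
qed

lemma bal_length: "bal w \<Longrightarrow> length w = 2 * length (filter id w)"
proof -
  assume "bal w"
  then have "int (length (filter id w)) = int (length (filter Not w))"
    by (simp add: bal_def height_def)
  moreover have "length (filter id w) + length (filter Not w) = length w"
    using sum_length_filter_compl[of id w] by (simp add: comp_def)
  ultimately show ?thesis by linarith
qed

lemma dyck_bal: "w \<in> dyck n \<longleftrightarrow> bal w \<and> length w = 2 * n"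
  unfolding dyck_def bal_def by auto

lemma bal_dyck: "bal w \<Longrightarrow> w \<in> dyck (length w div 2)"
  using bal_length dyck_bal by fastforce

lemma excursion_bal: assumes "excursion e" shows "bal e"
  unfolding bal_def
proof (intro conjI allI impI)
  show "height e (length e) = 0" using assms unfolding excursion_def by simp
  fix i assume "i \<le> length e"
  then consider "i = 0" | "0 < i \<and> i < length e" | "i = length e" by linarith
  then show "height e i \<ge> 0" using assms unfolding excursion_def
    by cases (auto simp: less_imp_le)
qed

lemma excursion_wrap: assumes "bal a" shows "excursion (True # a @ [False])"
proof -
  have "\<And>i. 0 < 1 + height a i" using bal_nonneg[OF assms] by (smt (verit))
  then show ?thesis
    unfolding excursion_def height_wrap using assms unfolding bal_def by simp
qed



lemma excursion_inner:
  assumes "excursion e" shows "\<exists>a. e = True # a @ [False] \<and> bal a"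
proof -
  from assms have ne: "e \<noteq> []" and z: "height e (length e) = 0"
    and pos: "\<And>i. 0 < i \<Longrightarrow> i < length e \<Longrightarrow> height e i > 0"
    unfolding excursion_def by auto
  obtain x e' where e: "e = x # e'" using ne by (cases e) auto
  have "e' \<noteq> []" using z e by (cases x) auto
  then obtain a y where e': "e' = a @ [y]" by (metis rev_exhaust)
  have l: "length e = length a + 2" using e e' by simp
  have h1: "height e 1 > 0" using pos[of 1] l by simp
  then have xT: "x = True" using e by (cases x) auto
  have hm: "height e (length a + 1) > 0" using pos[of "length a + 1"] l by simp
  have ha: "height e (length a + 1) = 1 + height a (length a)"
    using e e' xT by (simp add: height_append)
  have hz: "height e (length e) = 1 + height a (length a) + (if y then 1 else -1)"
    using e e' xT l by (simp add: height_append)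
  have yF: "y = False" and a0: "height a (length a) = 0" using hz z hm ha by (cases y; auto)+
  have "\<forall>j \<le> length a. height a j \<ge> 0"
  proof (intro allI impI)
    fix j assume "j \<le> length a"
    then have "height e (Suc j) > 0" using pos[of "Suc j"] l by simp
    moreover have "height e (Suc j) = 1 + height a j" using e e' xT \<open>j \<le> length a\<close>
      by (simp add: height_append)
    ultimately show "height a j \<ge> 0" by simp
  qed
  then show ?thesis using e e' xT yF a0 unfolding bal_def by auto
qed

lemma first_return:
  assumes "bal w" "w \<noteq> []"
  shows "\<exists>a b. w = True # a @ False # b \<and> bal a \<and> bal b"
proof -
  define Z where "Z = {i. 0 < i \<and> i \<le> length w \<and> height w i = 0}"
  have "length w \<in> Z" using assms unfolding Z_def bal_def by auto
  then have fin: "finite Z" "Z \<noteq> {}" unfolding Z_def by auto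
  define m where "m = Min Z"
  have mZ: "m \<in> Z" using fin m_def by simp
  have mmin: "\<And>i. i \<in> Z \<Longrightarrow> m \<le> i" using fin m_def by simp
  define c where "c = take m w"
  define r where "r = drop m w"
  have w: "w = c @ r" by (simp add: c_def r_def)
  have lc: "length c = m" using mZ unfolding Z_def c_def by auto
  have hc: "\<And>i. i \<le> m \<Longrightarrow> height c i = height w i"
    unfolding c_def height_def by (simp add: min_def)
  have c0: "height c (length c) = 0" using hc lc mZ Z_def by auto
  have bc: "bal c" and br: "bal r" using bal_split[of c r] w assms c0 by auto
  have "excursion c"
    unfolding excursion_def
  proof (intro conjI allI impI)
    show "c \<noteq> []" using lc mZ Z_def by auto
    show "height c (length c) = 0" by fact
    fix i assume i: "0 < i \<and> i < length c"
    then have "i \<notin> Z" using mmin lc by force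
    then have "height w i \<noteq> 0" using i lc mZ Z_def by auto
    moreover have "height w i \<ge> 0" using assms(1) bal_nonneg by blast
    ultimately show "height c i > 0" using hc i lc by auto
  qed
  then obtain a where "c = True # a @ [False]" "bal a" using excursion_inner by blast
  then show ?thesis using w br by auto
qed

lemma bal_induct[consumes 1, case_names Nil Wrap]:
  assumes "bal w" "P []"
    "\<And>a b. bal a \<Longrightarrow> bal b \<Longrightarrow> P a \<Longrightarrow> P b \<Longrightarrow> P (True # a @ False # b)"
  shows "P w"
  using assms(1)
proof (induction "length w" arbitrary: w rule: less_induct)
  case less
  show ?case
  proof (cases "w = []")
    case True then show ?thesis using assms(2) by simp
  next
    case False
    then obtain a b where "w = True # a @ False # b" "bal a" "bal b"
      using first_return less.prems by blast
    then show ?thesis using less assms(3) by simp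
  qed
qed

lemma bal_hd_last: "bal (True # a @ False # b) \<Longrightarrow> True"
  by simp



lemma step_ctx: assumes "tamari_step P Q" shows "tamari_step (x @ P @ y) (x @ Q @ y)"
proof -
  obtain u e v where "excursion e" "P = u @ [False] @ e @ v" "Q = u @ e @ [False] @ v"
    using assms unfolding tamari_step_def by blast
  then show ?thesis unfolding tamari_step_def
    by (intro exI[of _ "x @ u"] exI[of _ e] exI[of _ "v @ y"]) simp
qed

lemma le_ctx: "tamari_le P Q \<Longrightarrow> tamari_le (x @ P @ y) (x @ Q @ y)"
  unfolding tamari_le_def
proof (induction rule: rtranclp_induct)
  case base then show ?case by simp
next
  case (step y' z) then show ?case using rtranclp.rtrancl_into_rtrancl[OF step.IH step_ctx[OF step.hyps(2)]] by simp
qed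

lemma le_trans: "tamari_le P Q \<Longrightarrow> tamari_le Q R \<Longrightarrow> tamari_le P R"
  unfolding tamari_le_def by simp

lemma le_refl: "tamari_le P P"
  unfolding tamari_le_def by simp

lemma le_move: assumes "bal B" shows "tamari_le (pre @ False # B) (pre @ B @ [False])"
proof -
  have "\<forall>pre. tamari_le (pre @ False # B) (pre @ B @ [False])"
    using assms
  proof (induction rule: bal_induct)
    case Nil then show ?case by (simp add: le_refl)
  next
    case (Wrap a b)
    show ?case
    proof
      fix pre
      define e where "e = True # a @ [False]"
      have ex: "excursion e" unfolding e_def using Wrap excursion_wrap by blast
      have "tamari_step (pre @ False # e @ b) ((pre @ e) @ False # b)"
        unfolding tamari_step_def using ex by force
      then have "tamari_le (pre @ False # True # a @ False # b) ((pre @ e) @ False # b)"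
        unfolding tamari_le_def e_def by simp
      moreover have "tamari_le ((pre @ e) @ False # b) ((pre @ e) @ b @ [False])"
        using Wrap by blast
      ultimately have "tamari_le (pre @ False # True # a @ False # b) ((pre @ e) @ b @ [False])"
        by (rule le_trans)
      then show "tamari_le (pre @ False # True # a @ False # b) (pre @ (True # a @ False # b) @ [False])"
        unfolding e_def by simp
    qed
  qed
  then show ?thesis by blast
qed

lemma step_length: "tamari_step P Q \<Longrightarrow> length P = length Q"
  unfolding tamari_step_def by auto

lemma le_length: "tamari_le P Q \<Longrightarrow> length P = length Q"
  unfolding tamari_le_def
  by (induction rule: rtranclp_induct) (auto dest: step_length)

lemma rot_h1: "j \<le> length u \<Longrightarrow> height (u @ e @ False # v) j = height u j"
  by (simp add: height_append)

lemma rot_h1': "j \<le> length u \<Longrightarrow> height (u @ False # e @ v) j = height u j"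
  by (simp add: height_append)

lemma rot_h2: "i \<le> length e \<Longrightarrow> height (u @ e @ False # v) (length u + i) = height u (length u) + height e i"
  by (cases "i = 0") (simp_all add: height_append)

lemma rot_h3: "i \<le> length e \<Longrightarrow> height (u @ False # e @ v) (length u + 1 + i) = height u (length u) - 1 + height e i"
  by (simp add: height_append)

lemma rot_h4: "length u + length e + 1 \<le> j \<Longrightarrow>
   height (u @ e @ False # v) j = height (u @ False # e @ v) j"
proof -
  assume j: "length u + length e + 1 \<le> j"
  have a: "height ((u @ e @ [False]) @ v) j = height (u @ e @ [False]) (length u + length e + 1) + height v (j - (length u + length e + 1))"
    using height_append[of "u @ e @ [False]" v j] j by simp
  have b: "height ((u @ False # e) @ v) j = height (u @ False # e) (length u + length e + 1) + height v (j - (length u + length e + 1))"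
    using height_append[of "u @ False # e" v j] j by simp
  have c: "height (u @ e @ [False]) (length u + length e + 1) = height (u @ False # e) (length u + length e + 1)"
    by (simp add: height_append height_Cons)
  show ?thesis using a b c by simp
qed

lemma exc_nonneg: "excursion e \<Longrightarrow> height e i \<ge> 0"
  using excursion_bal bal_nonneg by blast

lemma exc_end: "excursion e \<Longrightarrow> height e (length e) = 0"
  unfolding excursion_def by simp

lemma step_bal: assumes "bal P" "tamari_step P R" shows "bal R"
proof -
  obtain u e v where ex: "excursion e" and P: "P = u @ False # e @ v" and R: "R = u @ e @ False # v"
    using assms(2) unfolding tamari_step_def by auto
  have lR: "length R = length P" using P R by simp
  have nn: "\<And>j. height R j \<ge> 0"
  proof -
    fix j
    consider "j \<le> length u" | "length u < j \<and> j \<le> length u + length e" | "length u + length e + 1 \<le> j" by linarith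
    then show "height R j \<ge> 0"
    proof cases
      case 1 then show ?thesis using rot_h1[OF 1, of e v] rot_h1'[OF 1, of e v] bal_nonneg[OF assms(1), of j] P R by simp
    next
      case 2
      define i where "i = j - length u"
      have i: "j = length u + i" "i \<le> length e" using 2 unfolding i_def by auto
      have "height R j = height u (length u) + height e i" using rot_h2[OF i(2)] R i by simp
      moreover have "height P (length u + 1 + i) = height u (length u) - 1 + height e i" using rot_h3[OF i(2)] P by simp
      moreover have "height P (length u + 1 + i) \<ge> 0" using bal_nonneg[OF assms(1)] .
      ultimately show ?thesis by simp
    next
      case 3 then show ?thesis using rot_h4[OF 3] bal_nonneg[OF assms(1), of j] P R by simp
    qed
  qed
  have "height R (length R) = height P (length P)"
    using rot_h4[of u e "length R" v] P R by simp
  then show ?thesis using assms(1) nn unfolding bal_def by simp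
qed

lemma unstep_bal: assumes "bal (u @ e @ False # v)" "excursion e" shows "bal (u @ False # e @ v)"
proof -
  let ?R = "u @ e @ False # v" and ?P = "u @ False # e @ v"
  have last: "height ?R (length u + length e + 1) = height u (length u) - 1"
    using rot_h4[of u e "length u + length e + 1" v] rot_h3[of "length e" e u v] exc_end[OF assms(2)]
    by simp
  have nn: "\<And>j. height ?P j \<ge> 0"
  proof -
    fix j
    consider "j \<le> length u" | "length u < j \<and> j < length u + length e + 1" | "length u + length e + 1 \<le> j" by linarith
    then show "height ?P j \<ge> 0"
    proof cases
      case 1 then show ?thesis using rot_h1[OF 1, of e v] rot_h1'[OF 1, of e v] bal_nonneg[OF assms(1), of j] by simp
    next
      case 2
      define i where "i = j - length u - 1"
      have i: "j = length u + 1 + i" "i \<le> length e" using 2 unfolding i_def by auto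
      have "height ?P j = height u (length u) - 1 + height e i" using rot_h3[OF i(2)] i by simp
      moreover have "height e i \<ge> 0" using exc_nonneg[OF assms(2)] .
      moreover have "height ?R (length u + length e + 1) \<ge> 0" using bal_nonneg[OF assms(1)] .
      ultimately show ?thesis using last by simp
    next
      case 3 then show ?thesis using rot_h4[OF 3, of v] bal_nonneg[OF assms(1), of j] by simp
    qed
  qed
  have "height ?P (length ?P) = height ?R (length ?R)"
    using rot_h4[of u e "length ?R" v] by simp
  then show ?thesis using assms(1) nn unfolding bal_def by simp
qed

lemma seg_pos: assumes "bal (u @ e @ False # v)" "excursion e" "length u \<le> j" "j \<le> length u + length e"
  shows "height (u @ e @ False # v) j \<ge> 1"
proof -
  let ?R = "u @ e @ False # v"
  have last: "height ?R (length u + length e + 1) = height u (length u) - 1"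
    using rot_h4[of u e "length u + length e + 1" v] rot_h3[of "length e" e u v] exc_end[OF assms(2)]
    by simp
  define i where "i = j - length u"
  have i: "j = length u + i" "i \<le> length e" using assms(3,4) unfolding i_def by auto
  have "height ?R j = height u (length u) + height e i" using rot_h2[OF i(2)] i by simp
  moreover have "height e i \<ge> 0" using exc_nonneg[OF assms(2)] .
  moreover have "height ?R (length u + length e + 1) \<ge> 0" using bal_nonneg[OF assms(1)] .
  ultimately show ?thesis using last by simp
qed

lemma split_left: assumes "u @ s @ v = X @ W" "length u + length s \<le> length X"
  shows "\<exists>v1. X = u @ s @ v1 \<and> v = v1 @ W"
proof -
  let ?k = "length X - (length u + length s)"
  have "X = take (length X) (u @ s @ v)" using assms(1) by (metis append_eq_conv_conj)
  hence X: "X = u @ s @ take ?k v" using assms(2) by (simp add: take_append)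
  have "W = drop (length X) (u @ s @ v)" using assms(1) by (metis append_eq_conv_conj)
  hence "W = drop ?k v" using assms(2) by (simp add: drop_append)
  thus ?thesis using X by (intro exI[of _ "take ?k v"]) simp
qed

lemma split_right: assumes "u @ s @ v = X @ W" "length X \<le> length u"
  shows "\<exists>u1. u = X @ u1 \<and> W = u1 @ s @ v"
proof -
  have "X = take (length X) (u @ s @ v)" using assms(1) by (metis append_eq_conv_conj)
  hence X: "X = take (length X) u" using assms(2) by (simp add: take_append)
  have "W = drop (length X) (u @ s @ v)" using assms(1) by (metis append_eq_conv_conj)
  hence "W = drop (length X) u @ s @ v" using assms(2) by (simp add: drop_append)
  thus ?thesis using X append_take_drop_id[of "length X" u] by (intro exI[of _ "drop (length X) u"]) simp
qed



lemma decomp_up: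
  assumes "tamari_le P1 Q1" "tamari_le (A @ B) Q2" "bal B"
  shows "tamari_le (P1 @ True # A @ False # B) (Q1 @ True # Q2 @ [False])"
proof -
  have 1: "tamari_le (P1 @ True # A @ False # B) (Q1 @ True # A @ False # B)"
    using le_ctx[OF assms(1), of "[]" "True # A @ False # B"] by simp
  have 2: "tamari_le ((Q1 @ True # A) @ False # B) ((Q1 @ True # A) @ B @ [False])"
    using le_move[OF assms(3)] .
  have 3: "tamari_le ((Q1 @ [True]) @ (A @ B) @ [False]) ((Q1 @ [True]) @ Q2 @ [False])"
    using le_ctx[OF assms(2)] .
  show ?thesis using le_trans[OF 1 le_trans[OF _ 3]] 2 by simp
qed

lemma last_return:
  assumes "bal Q" "Q \<noteq> []"
  shows "\<exists>Q1 Q2. Q = Q1 @ True # Q2 @ [False] \<and> bal Q1 \<and> bal Q2"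
proof -
  have "Q \<noteq> [] \<longrightarrow> (\<exists>Q1 Q2. Q = Q1 @ True # Q2 @ [False] \<and> bal Q1 \<and> bal Q2)"
    using assms(1)
  proof (induction rule: bal_induct)
    case Nil then show ?case by simp
  next
    case (Wrap a b)
    show ?case
    proof (cases "b = []")
      case True then show ?thesis using Wrap by (intro impI exI[of _ "[]"] exI[of _ a]) simp
    next
      case False
      then obtain b1 b2 where b: "b = b1 @ True # b2 @ [False]" "bal b1" "bal b2" using Wrap by blast
      have "bal ((True # a @ [False]) @ b1)" using bal_append[OF bal_wrap[OF Wrap(1)] b(2)] .
      then show ?thesis using b by (intro impI exI[of _ "True # a @ False # b1"] exI[of _ b2]) simp
    qed
  qed
  then show ?thesis using assms by blast
qed

lemma lr_pos:
  assumes "bal Q1" "bal Q2" "length Q1 < j" "j \<le> length Q1 + length Q2 + 1"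
  shows "height (Q1 @ True # Q2 @ [False]) j \<ge> 1"
proof -
  define t where "t = j - length Q1 - 1"
  have j: "j = length Q1 + 1 + t" "t \<le> length Q2" using assms(3,4) unfolding t_def by auto
  have "height (Q1 @ True # Q2 @ [False]) j = height Q1 (length Q1) + 1 + height Q2 t"
    using j by (simp add: height_append)
  then show ?thesis using assms(1) bal_nonneg[OF assms(2), of t] unfolding bal_def by simp
qed

lemma height_prefix_bal: "bal X \<Longrightarrow> height (X @ Y) (length X) = 0"
  by (simp add: height_append bal_def)

lemma lr_unique:
  assumes eq: "Q1 @ True # Q2 @ [False] = Q1' @ True # Q2' @ [False]"
    and b: "bal Q1" "bal Q2" "bal Q1'" "bal Q2'"
  shows "Q1 = Q1' \<and> Q2 = Q2'"
proof -
  have len: "length Q1 + length Q2 = length Q1' + length Q2'"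
    using arg_cong[OF eq, of length] by simp
  have "\<not> length Q1 < length Q1'"
  proof
    assume lt: "length Q1 < length Q1'"
    have "height (Q1 @ True # Q2 @ [False]) (length Q1') \<ge> 1"
      using lr_pos[OF b(1,2) lt] len by simp
    moreover have "height (Q1' @ True # Q2' @ [False]) (length Q1') = 0"
      using height_prefix_bal[OF b(3)] by simp
    ultimately show False using eq by simp
  qed
  moreover have "\<not> length Q1' < length Q1"
  proof
    assume lt: "length Q1' < length Q1"
    have "height (Q1' @ True # Q2' @ [False]) (length Q1) \<ge> 1"
      using lr_pos[OF b(3,4) lt] len by simp
    moreover have "height (Q1 @ True # Q2 @ [False]) (length Q1) = 0"
      using height_prefix_bal[OF b(1)] by simp
    ultimately show False using eq by simp
  qed
  ultimately have "length Q1 = length Q1'" by simp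
  then show ?thesis using eq by simp
qed

lemma fr_neg: "bal A \<Longrightarrow> height (A @ False # B) (Suc (length A)) = -1"
  by (simp add: height_append bal_def)

lemma fr_unique:
  assumes eq: "A @ False # B = A' @ False # B'"
    and b: "bal A" "bal A'"
  shows "A = A' \<and> B = B'"
proof -
  have "\<not> length A < length A'"
  proof
    assume lt: "length A < length A'"
    have "height (A' @ False # B') (Suc (length A)) = height A' (Suc (length A))"
      using lt by (simp add: height_append)
    then have "height (A' @ False # B') (Suc (length A)) \<ge> 0" using bal_nonneg[OF b(2)] by simp
    then show False using fr_neg[OF b(1), of B] eq by simp
  qed
  moreover have "\<not> length A' < length A"
  proof
    assume lt: "length A' < length A"
    have "height (A @ False # B) (Suc (length A')) = height A (Suc (length A'))"
      using lt by (simp add: height_append)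
    then have "height (A @ False # B) (Suc (length A')) \<ge> 0" using bal_nonneg[OF b(1)] by simp
    then show False using fr_neg[OF b(2), of B'] eq by simp
  qed
  ultimately have "length A = length A'" by simp
  then show ?thesis using eq by simp
qed



lemma step_le: "tamari_step P Q \<Longrightarrow> tamari_le P Q"
  unfolding tamari_le_def by simp

lemma step_back:
  assumes st: "tamari_step P R" and bP: "bal P"
    and R: "R = R1 @ True # A @ False # B" and b: "bal R1" "bal A" "bal B"
  shows "\<exists>P1 A' B'. P = P1 @ True # A' @ False # B' \<and> length P1 = length R1 \<and> tamari_le P1 R1
     \<and> tamari_le (A' @ B') (A @ B) \<and> bal P1 \<and> bal A' \<and> bal B'"
proof -
  obtain u e v where ex: "excursion e" and P: "P = u @ False # e @ v" and Ru: "R = u @ e @ False # v"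
    using st unfolding tamari_step_def by auto
  have bR: "bal R" using step_bal[OF bP st] .
  have seg: "\<And>j. length u \<le> j \<Longrightarrow> j \<le> length u + length e \<Longrightarrow> height R j \<ge> 1"
    using seg_pos[OF _ ex] bR Ru by blast
  have h0: "height R (length R1) = 0" using R height_prefix_bal[OF b(1)] by simp
  have bX: "bal (R1 @ True # A @ [False])" using bal_append[OF b(1) bal_wrap[OF b(2)]] by simp
  have h1: "height R (length R1 + length A + 2) = 0"
    using height_prefix_bal[OF bX, of B] R by simp
  have n0: "\<not> (length u \<le> length R1 \<and> length R1 \<le> length u + length e)" using seg h0 by force
  have n1: "\<not> (length u \<le> length R1 + length A + 2 \<and> length R1 + length A + 2 \<le> length u + length e)"
    using seg h1 by force
  have ene: "e \<noteq> []" using ex unfolding excursion_def by simp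
  consider (c1) "length u + length e < length R1"
    | (c2) "length R1 < length u \<and> length u + length e \<le> length R1 + length A + 1"
    | (c3) "length R1 + length A + 2 < length u"
    using n0 n1 by linarith
  then show ?thesis
  proof cases
    case c1
    have "u @ (e @ [False]) @ v = R1 @ (True # A @ False # B)" using R Ru by simp
    then obtain v1 where v1: "R1 = u @ (e @ [False]) @ v1" "v = v1 @ (True # A @ False # B)"
    proof -
      have "length u + length (e @ [False]) \<le> length R1" using c1 by simp
      then show ?thesis using split_left that \<open>u @ (e @ [False]) @ v = R1 @ (True # A @ False # B)\<close> by blast
    qed
    define P1 where "P1 = u @ False # e @ v1"
    have "tamari_step P1 R1" unfolding tamari_step_def P1_def v1(1) using ex by force
    moreover have "bal P1" unfolding P1_def using unstep_bal[OF _ ex] b(1) v1(1) by simp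
    moreover have "P = P1 @ True # A @ False # B" using P v1(2) P1_def by simp
    moreover have "length P1 = length R1" using v1(1) P1_def by simp
    ultimately show ?thesis using b step_le le_refl by blast
  next
    case c2
    have "u @ (e @ [False]) @ v = (R1 @ [True]) @ (A @ False # B)" using R Ru by simp
    then obtain u1 where u1: "u = (R1 @ [True]) @ u1" "A @ False # B = u1 @ (e @ [False]) @ v"
    proof -
      have "length (R1 @ [True]) \<le> length u" using c2 by simp
      then show ?thesis using split_right that \<open>u @ (e @ [False]) @ v = (R1 @ [True]) @ (A @ False # B)\<close> by blast
    qed
    have lu: "length u = length R1 + 1 + length u1" using u1(1) by simp
    show ?thesis
    proof (cases "length u1 + length e + 1 \<le> length A")
      case True
      have "u1 @ (e @ [False]) @ v = A @ (False # B)" using u1(2) by simp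
      then obtain v1 where v1: "A = u1 @ (e @ [False]) @ v1" "v = v1 @ (False # B)"
      proof -
        have "length u1 + length (e @ [False]) \<le> length A" using True by simp
        then show ?thesis using split_left that \<open>u1 @ (e @ [False]) @ v = A @ (False # B)\<close> by blast
      qed
      define A' where "A' = u1 @ False # e @ v1"
      have "tamari_step (A' @ B) (A @ B)" unfolding tamari_step_def A'_def v1(1) using ex
        by (intro exI[of _ u1] exI[of _ e] exI[of _ "v1 @ B"]) simp
      moreover have "bal A'" unfolding A'_def using unstep_bal[OF _ ex] b(2) v1(1) by simp
      moreover have "P = R1 @ True # A' @ False # B" using P u1(1) v1(2) A'_def by simp
      ultimately show ?thesis using b step_le le_refl by blast
    next
      case False
      then have l: "length A = length u1 + length e" using c2 lu by simp
      have eq: "A @ False # B = (u1 @ e) @ False # v" using u1(2) by simp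
      have "A = u1 @ e \<and> False # B = False # v"
        using append_eq_append_conv[of A "u1 @ e" "False # B" "False # v"] eq l by simp
      then have AB: "A = u1 @ e" "B = v" by simp_all
      have "height A (length A) = height u1 (length u1) + height e (length e)"
        using AB ene by (simp add: height_append)
      then have "height u1 (length u1) = 0" using b(2) exc_end[OF ex] unfolding bal_def by simp
      then have bu1: "bal u1" using bal_split b(2) AB(1) by blast
      have beB: "bal (e @ B)" using bal_append[OF excursion_bal[OF ex] b(3)] .
      have "P = R1 @ True # u1 @ False # (e @ B)" using P u1(1) AB by simp
      moreover have "u1 @ (e @ B) = A @ B" using AB by simp
      ultimately have "P = R1 @ True # u1 @ False # (e @ B) \<and> length R1 = length R1 \<and> tamari_le R1 R1
     \<and> tamari_le (u1 @ (e @ B)) (A @ B) \<and> bal R1 \<and> bal u1 \<and> bal (e @ B)"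
        using b bu1 beB le_refl[of "A @ B"] le_refl[of R1] by (simp add: AB(1))
      then show ?thesis by blast
    qed
  next
    case c3
    have "u @ (e @ [False]) @ v = (R1 @ True # A @ [False]) @ B" using R Ru by simp
    then obtain u1 where u1: "u = (R1 @ True # A @ [False]) @ u1" "B = u1 @ (e @ [False]) @ v"
    proof -
      have "length (R1 @ True # A @ [False]) \<le> length u" using c3 by simp
      then show ?thesis using split_right that \<open>u @ (e @ [False]) @ v = (R1 @ True # A @ [False]) @ B\<close> by blast
    qed
    define B' where "B' = u1 @ False # e @ v"
    have "tamari_step (A @ B') (A @ B)" unfolding tamari_step_def B'_def u1(2) using ex
      by (intro exI[of _ "A @ u1"] exI[of _ e] exI[of _ v]) simp
    moreover have "bal B'" unfolding B'_def using unstep_bal[OF _ ex] b(3) u1(2) by simp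
    moreover have "P = R1 @ True # A @ False # B'" using P u1(1) B'_def by simp
    ultimately show ?thesis using b step_le le_refl by blast
  qed
qed

lemma decomp_down:
  assumes "tamari_le R Q" "bal R" "Q = Q1 @ True # Q2 @ [False]" "bal Q1" "bal Q2"
  shows "\<exists>P1 A B. R = P1 @ True # A @ False # B \<and> length P1 = length Q1 \<and> tamari_le P1 Q1
     \<and> tamari_le (A @ B) Q2 \<and> bal P1 \<and> bal A \<and> bal B"
proof -
  have "bal R \<longrightarrow> (\<exists>P1 A B. R = P1 @ True # A @ False # B \<and> length P1 = length Q1 \<and> tamari_le P1 Q1
     \<and> tamari_le (A @ B) Q2 \<and> bal P1 \<and> bal A \<and> bal B)"
    using assms(1) unfolding tamari_le_def
  proof (induction rule: converse_rtranclp_induct)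
    case base
    show ?case using assms(3-5) le_refl unfolding tamari_le_def
      by (intro impI exI[of _ Q1] exI[of _ Q2] exI[of _ "[]"]) simp
  next
    case (step P R)
    show ?case
    proof
      assume bP: "bal P"
      have bR: "bal R" using step_bal[OF bP step.hyps(1)] .
      then obtain R1 A B where R: "R = R1 @ True # A @ False # B" "length R1 = length Q1"
        "tamari_le R1 Q1" "tamari_le (A @ B) Q2" "bal R1" "bal A" "bal B"
        using step.IH unfolding tamari_le_def by blast
      obtain P1 A' B' where P: "P = P1 @ True # A' @ False # B'" "length P1 = length R1" "tamari_le P1 R1"
        "tamari_le (A' @ B') (A @ B)" "bal P1" "bal A'" "bal B'"
        using step_back[OF step.hyps(1) bP R(1) R(5-7)] by blast
      show "\<exists>P1 A B. P = P1 @ True # A @ False # B \<and> length P1 = length Q1 \<and> (tamari_step\<^sup>*\<^sup>*) P1 Q1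
         \<and> (tamari_step\<^sup>*\<^sup>*) (A @ B) Q2 \<and> bal P1 \<and> bal A \<and> bal B"
      proof (intro exI conjI)
        show "P = P1 @ True # A' @ False # B'" by (fact P(1))
        show "length P1 = length Q1" using P(2) R(2) by simp
        show "(tamari_step\<^sup>*\<^sup>*) P1 Q1" using le_trans[OF P(3) R(3)] unfolding tamari_le_def .
        show "(tamari_step\<^sup>*\<^sup>*) (A' @ B') Q2" using le_trans[OF P(4) R(4)] unfolding tamari_le_def .
      qed (fact P)+
    qed
  qed
  then show ?thesis using assms(2) by blast
qed



definition Zs :: "bool list \<Rightarrow> nat set" where
  "Zs P = {i. i \<le> length P \<and> height P i = 0}"

lemma contact_Zs: "contact P = card (Zs P)"
  unfolding contact_def Zs_def ..

lemma finite_Zs[simp]: "finite (Zs P)"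
  unfolding Zs_def by (rule finite_subset[of _ "{..length P}"]) auto

lemma Zs_append:
  assumes "bal X" "bal B"
  shows "Zs (X @ B) = Zs X \<union> (\<lambda>j. j + length X) ` Zs B"
proof (intro set_eqI iffI)
  fix j assume "j \<in> Zs (X @ B)"
  then have j: "j \<le> length X + length B" "height (X @ B) j = 0" unfolding Zs_def by auto
  show "j \<in> Zs X \<union> (\<lambda>j. j + length X) ` Zs B"
  proof (cases "j \<le> length X")
    case True then show ?thesis using j unfolding Zs_def by (simp add: height_append)
  next
    case False
    then have "j - length X \<in> Zs B" using j assms(1) unfolding Zs_def bal_def by (simp add: height_append)
    moreover have "j = (j - length X) + length X" using False by simp
    ultimately show ?thesis by blast
  qed
next
  fix j assume "j \<in> Zs X \<union> (\<lambda>j. j + length X) ` Zs B"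
  then show "j \<in> Zs (X @ B)"
  proof
    assume "j \<in> Zs X" then show ?thesis unfolding Zs_def by (simp add: height_append)
  next
    assume "j \<in> (\<lambda>j. j + length X) ` Zs B"
    then obtain t where t: "t \<in> Zs B" "j = t + length X" by blast
    show ?thesis
    proof (cases "t = 0")
      case True then show ?thesis using t assms(1) unfolding Zs_def bal_def by (simp add: height_append)
    next
      case False then show ?thesis using t assms(1) unfolding Zs_def bal_def by (simp add: height_append)
    qed
  qed
qed

lemma contact_append:
  assumes "bal X" "bal B"
  shows "contact (X @ B) + 1 = contact X + contact B"
proof -
  have int: "Zs X \<inter> (\<lambda>j. j + length X) ` Zs B = {length X}"
  proof (intro set_eqI iffI)
    fix j assume "j \<in> Zs X \<inter> (\<lambda>j. j + length X) ` Zs B"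
    then show "j \<in> {length X}" unfolding Zs_def by auto
  next
    fix j assume "j \<in> {length X}"
    moreover have "0 \<in> Zs B" unfolding Zs_def by simp
    moreover have "length X \<in> Zs X" using assms(1) unfolding Zs_def bal_def by simp
    ultimately show "j \<in> Zs X \<inter> (\<lambda>j. j + length X) ` Zs B" by force
  qed
  have ci: "card ((\<lambda>j. j + length X) ` Zs B) = card (Zs B)"
    by (rule card_image) (simp add: inj_on_def)
  have "card (Zs X \<union> (\<lambda>j. j + length X) ` Zs B) + card (Zs X \<inter> (\<lambda>j. j + length X) ` Zs B)
      = card (Zs X) + card ((\<lambda>j. j + length X) ` Zs B)"
    using card_Un_Int[of "Zs X" "(\<lambda>j. j + length X) ` Zs B"] by simp
  then show ?thesis unfolding contact_Zs Zs_append[OF assms] int ci by simp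
qed

lemma contact_wrap: "bal A \<Longrightarrow> contact (True # A @ [False]) = 2"
proof -
  assume b: "bal A"
  have "Zs (True # A @ [False]) = {0, Suc (Suc (length A))}"
  proof (intro set_eqI iffI)
    fix j assume j: "j \<in> Zs (True # A @ [False])"
    show "j \<in> {0, Suc (Suc (length A))}"
    proof (rule ccontr)
      assume "j \<notin> {0, Suc (Suc (length A))}"
      then have "0 < j" "j \<le> Suc (length A)" using j unfolding Zs_def by auto
      then have "height (True # A @ [False]) j = 1 + height A (j - 1)" unfolding height_wrap by simp
      then show False using j bal_nonneg[OF b, of "j - 1"] unfolding Zs_def by simp
    qed
  next
    fix j assume "j \<in> {0, Suc (Suc (length A))}"
    then show "j \<in> Zs (True # A @ [False])" using b unfolding Zs_def height_wrap bal_def by auto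
  qed
  then show ?thesis unfolding contact_Zs by simp
qed

lemma contact_decomp:
  assumes "bal P1" "bal A" "bal B"
  shows "contact (P1 @ True # A @ False # B) = contact P1 + contact B"
proof -
  have bw: "bal (True # A @ [False])" using bal_wrap[OF assms(2)] .
  have 1: "contact (P1 @ (True # A @ [False])) + 1 = contact P1 + 2"
    using contact_append[OF assms(1) bw] contact_wrap[OF assms(2)] by simp
  have bX: "bal (P1 @ (True # A @ [False]))" using bal_append[OF assms(1) bw] .
  have 2: "contact ((P1 @ (True # A @ [False])) @ B) + 1 = contact (P1 @ (True # A @ [False])) + contact B"
    using contact_append[OF bX assms(3)] .
  show ?thesis using 1 2 by simp
qed

lemma contact_drop:
  assumes "bal P" "i \<in> Zs P"
  shows "contact (drop i P) = card {j \<in> Zs P. i \<le> j}"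
proof -
  have li: "length (take i P) = i" using assms(2) unfolding Zs_def by simp
  have h: "height (take i P) (length (take i P)) = 0"
    using assms(2) li unfolding Zs_def height_def by simp
  have bb: "bal (take i P)" "bal (drop i P)" using bal_split[of "take i P" "drop i P"] assms(1) h by auto
  have "Zs P = Zs (take i P) \<union> (\<lambda>j. j + i) ` Zs (drop i P)"
    using Zs_append[OF bb] li by simp
  moreover have "\<And>j. j \<in> Zs (take i P) \<Longrightarrow> j \<le> i" unfolding Zs_def using li by auto
  moreover have "i \<in> (\<lambda>j. j + i) ` Zs (drop i P)" unfolding Zs_def by force
  ultimately have "{j \<in> Zs P. i \<le> j} = (\<lambda>j. j + i) ` Zs (drop i P)" by fastforce
  moreover have "card ((\<lambda>j. j + i) ` Zs (drop i P)) = card (Zs (drop i P))"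
    by (rule card_image) (simp add: inj_on_def)
  ultimately show ?thesis unfolding contact_Zs by simp
qed

lemma sum_contact_drop:
  assumes "bal P"
  shows "(\<Sum>i\<in>Zs P. (x::real) ^ contact (drop i P)) = (\<Sum>j=1..contact P. x ^ j)"
proof -
  define g where "g i = card {j \<in> Zs P. i \<le> j}" for i
  have eq: "\<And>i. i \<in> Zs P \<Longrightarrow> contact (drop i P) = g i" using contact_drop[OF assms] g_def by simp
  have inj: "inj_on g (Zs P)"
  proof (rule inj_onI)
    fix a b assume ab: "a \<in> Zs P" "b \<in> Zs P" "g a = g b"
    show "a = b"
    proof (rule ccontr)
      assume "a \<noteq> b"
      then consider "a < b" | "b < a" by linarith
      then show False
      proof cases
        case 1
        have "{j \<in> Zs P. b \<le> j} \<subseteq> {j \<in> Zs P. a \<le> j}" using 1 by auto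
        moreover have "a \<in> {j \<in> Zs P. a \<le> j}" "a \<notin> {j \<in> Zs P. b \<le> j}" using 1 ab by auto
        ultimately have "{j \<in> Zs P. b \<le> j} \<subset> {j \<in> Zs P. a \<le> j}" by blast
        then have "g b < g a" unfolding g_def by (intro psubset_card_mono) simp_all
        then show False using ab by simp
      next
        case 2
        have "{j \<in> Zs P. a \<le> j} \<subseteq> {j \<in> Zs P. b \<le> j}" using 2 by auto
        moreover have "b \<in> {j \<in> Zs P. b \<le> j}" "b \<notin> {j \<in> Zs P. a \<le> j}" using 2 ab by auto
        ultimately have "{j \<in> Zs P. a \<le> j} \<subset> {j \<in> Zs P. b \<le> j}" by blast
        then have "g a < g b" unfolding g_def by (intro psubset_card_mono) simp_all
        then show False using ab by simp
      qed
    qed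
  qed
  have sub: "g ` Zs P \<subseteq> {1..contact P}"
  proof
    fix y assume "y \<in> g ` Zs P"
    then obtain i where i: "i \<in> Zs P" "y = g i" by blast
    have "i \<in> {j \<in> Zs P. i \<le> j}" using i by simp
    then have "g i \<ge> 1" unfolding g_def by (metis (no_types, lifting) One_nat_def Suc_leI card_gt_0_iff empty_iff finite_Zs mem_Collect_eq finite_subset subsetI)
    moreover have "g i \<le> contact P" unfolding g_def contact_Zs by (intro card_mono) auto
    ultimately show "y \<in> {1..contact P}" using i by simp
  qed
  have "card (g ` Zs P) = contact P" using card_image[OF inj] contact_Zs by simp
  then have img: "g ` Zs P = {1..contact P}" using sub by (intro card_subset_eq) simp_all
  have "(\<Sum>i\<in>Zs P. x ^ contact (drop i P)) = (\<Sum>i\<in>Zs P. x ^ g i)" using eq by simp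
  also have "\<dots> = (\<Sum>j\<in>g ` Zs P. x ^ j)" using sum.reindex[OF inj, of "\<lambda>j. x ^ j"] by simp
  finally show ?thesis using img by simp
qed

lemma geom: "((x::real) - 1) * (\<Sum>j=1..c. x ^ j) = x * (x ^ c - 1)"
proof (induction c)
  case 0 then show ?case by simp
next
  case (Suc c)
  have "(\<Sum>j=1..Suc c. x ^ j) = (\<Sum>j=1..c. x ^ j) + x ^ Suc c" by simp
  then show ?case using Suc by (simp add: algebra_simps)
qed

definition hsum :: "real \<Rightarrow> bool list \<Rightarrow> real" where
  "hsum s Q = (\<Sum>i=0..length Q. s ^ nat (height Q i))"

lemma hsum_decomp:
  assumes "bal Q1" "bal Q2"
  shows "hsum s (Q1 @ True # Q2 @ [False]) = hsum s Q1 + s * hsum s Q2 + 1"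
proof -
  let ?Q = "Q1 @ True # Q2 @ [False]"
  let ?f = "\<lambda>i. s ^ nat (height ?Q i)"
  define L1 L2 where "L1 = length Q1" and "L2 = length Q2"
  have set: "{0..L1 + L2 + 2} = ({0..L1} \<union> {0 + (L1 + 1)..L2 + (L1 + 1)}) \<union> {L1 + L2 + 2}" by auto
  have "hsum s ?Q = sum ?f {0..L1 + L2 + 2}" unfolding hsum_def L1_def L2_def by simp
  also have "\<dots> = sum ?f {0..L1} + sum ?f {0 + (L1 + 1)..L2 + (L1 + 1)} + ?f (L1 + L2 + 2)"
    unfolding set by (subst sum.union_disjoint, simp, simp, force)+ simp
  also have "sum ?f {0..L1} = hsum s Q1"
    unfolding hsum_def L1_def by (rule sum.cong) (simp_all add: height_append)
  also have "sum ?f {0 + (L1 + 1)..L2 + (L1 + 1)} = sum (\<lambda>i. ?f (i + (L1 + 1))) {0..L2}"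
    by (rule sum.shift_bounds_cl_nat_ivl)
  also have "\<dots> = s * hsum s Q2"
    unfolding hsum_def L2_def sum_distrib_left
  proof (rule sum.cong)
    fix i assume i: "i \<in> {0..length Q2}"
    have "height ?Q (i + (L1 + 1)) = 1 + height Q2 i"
      using i assms(1) unfolding L1_def bal_def by (simp add: height_append)
    moreover have "height Q2 i \<ge> 0" using bal_nonneg[OF assms(2)] .
    ultimately have "nat (height ?Q (i + (L1 + 1))) = Suc (nat (height Q2 i))" by simp
    then show "?f (i + (L1 + 1)) = s * s ^ nat (height Q2 i)" by simp
  qed simp
  also have "?f (L1 + L2 + 2) = 1"
    using height_prefix_bal[OF bal_append[OF assms(1) bal_wrap[OF assms(2)]], of "[]"]
    unfolding L1_def L2_def by simp
  finally show ?thesis by simp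
qed



abbreviation I where "I \<equiv> tamari_intervals"

definition Sg :: "nat \<Rightarrow> ((bool list \<times> bool list) \<times> nat) set" where
  "Sg l = (SIGMA pq:I l. Zs (fst pq))"

definition Sn :: "nat \<Rightarrow> ((bool list \<times> bool list) \<times> ((bool list \<times> bool list) \<times> nat)) set" where
  "Sn n = (\<Union>k<n. I k \<times> Sg (n - 1 - k))"

fun psi :: "((bool list \<times> bool list) \<times> ((bool list \<times> bool list) \<times> nat)) \<Rightarrow> bool list \<times> bool list" where
  "psi ((P1, Q1), ((P2, Q2), i)) = (P1 @ True # take i P2 @ False # drop i P2, Q1 @ True # Q2 @ [False])"

lemma mem_I: "(P, Q) \<in> I n \<longleftrightarrow> P \<in> dyck n \<and> Q \<in> dyck n \<and> tamari_le P Q"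
  unfolding tamari_intervals_def by simp

lemma finite_dyck: "finite (dyck n)"
proof -
  have "dyck n \<subseteq> {w. set w \<subseteq> UNIV \<and> length w = 2 * n}" unfolding dyck_def by auto
  then show ?thesis using finite_lists_length_eq[of "UNIV :: bool set" "2 * n"] finite_subset by auto
qed

lemma finite_I: "finite (I n)"
proof -
  have "I n \<subseteq> dyck n \<times> dyck n" unfolding tamari_intervals_def by auto
  then show ?thesis using finite_dyck finite_subset by blast
qed

lemma finite_Sg: "finite (Sg l)"
  unfolding Sg_def using finite_I by (intro finite_SigmaI) auto

lemma finite_Sn: "finite (Sn n)"
  unfolding Sn_def using finite_I finite_Sg by auto

lemma split_Zs:
  assumes "bal P" "i \<in> Zs P"
  shows "bal (take i P) \<and> bal (drop i P) \<and> length (take i P) = i"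
proof -
  have li: "length (take i P) = i" using assms(2) unfolding Zs_def by simp
  have h: "height (take i P) (length (take i P)) = 0"
    using assms(2) li unfolding Zs_def height_def by simp
  show ?thesis using bal_split[of "take i P" "drop i P"] assms(1) h li by auto
qed

lemma psi_into:
  assumes "t \<in> Sn n" shows "psi t \<in> I n"
proof -
  obtain k P1 Q1 P2 Q2 i where t: "t = ((P1, Q1), ((P2, Q2), i))" and k: "k < n"
    and I1: "(P1, Q1) \<in> I k" and I2: "(P2, Q2) \<in> I (n - 1 - k)" and iZ: "i \<in> Zs P2"
    using assms unfolding Sn_def Sg_def by auto
  have d: "bal P1" "length P1 = 2 * k" "bal Q1" "length Q1 = 2 * k" "tamari_le P1 Q1"
    using I1 unfolding mem_I dyck_bal by auto
  have d2: "bal P2" "length P2 = 2 * (n - 1 - k)" "bal Q2" "length Q2 = 2 * (n - 1 - k)" "tamari_le P2 Q2"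
    using I2 unfolding mem_I dyck_bal by auto
  have ab: "bal (take i P2)" "bal (drop i P2)" using split_Zs[OF d2(1) iZ] by auto
  have bP: "bal (P1 @ True # take i P2 @ False # drop i P2)"
    using bal_append[OF d(1) bal_append[OF bal_wrap[OF ab(1)] ab(2)]] by simp
  have bQ: "bal (Q1 @ True # Q2 @ [False])"
    using bal_append[OF d(3) bal_wrap[OF d2(3)]] by simp
  have lP: "length (P1 @ True # take i P2 @ False # drop i P2) = 2 * n"
  proof -
    have "length (take i P2) + length (drop i P2) = length P2" by simp
    then show ?thesis using d(2) d2(2) k by simp
  qed
  have lQ: "length (Q1 @ True # Q2 @ [False]) = 2 * n" using d(4) d2(4) k by simp
  have le: "tamari_le (P1 @ True # take i P2 @ False # drop i P2) (Q1 @ True # Q2 @ [False])"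
    using decomp_up[OF d(5) _ ab(2), of "take i P2"] d2(5) by simp
  show ?thesis unfolding t psi.simps mem_I dyck_bal using bP bQ lP lQ le by simp
qed

lemma psi_onto:
  assumes "(P, Q) \<in> I n" "n \<ge> 1"
  shows "(P, Q) \<in> psi ` Sn n"
proof -
  have dP: "bal P" "length P = 2 * n" and dQ: "bal Q" "length Q = 2 * n" and le: "tamari_le P Q"
    using assms(1) unfolding mem_I dyck_bal by auto
  have "Q \<noteq> []" using dQ assms(2) by auto
  then obtain Q1 Q2 where Q: "Q = Q1 @ True # Q2 @ [False]" "bal Q1" "bal Q2"
    using last_return[OF dQ(1)] by blast
  obtain P1 A B where P: "P = P1 @ True # A @ False # B" "length P1 = length Q1" "tamari_le P1 Q1"
     "tamari_le (A @ B) Q2" "bal P1" "bal A" "bal B"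
    using decomp_down[OF le dP(1) Q] by blast
  define k where "k = length Q1 div 2"
  define l where "l = length Q2 div 2"
  have lQ1: "length Q1 = 2 * k" using bal_length[OF Q(2)] unfolding k_def by simp
  have lQ2: "length Q2 = 2 * l" using bal_length[OF Q(3)] unfolding l_def by simp
  have nkl: "n = k + l + 1" using dQ(2) Q(1) lQ1 lQ2 by simp
  have lAB: "length (A @ B) = length Q2" using le_length[OF P(4)] .
  have I1: "(P1, Q1) \<in> I k" unfolding mem_I dyck_bal using P Q lQ1 by simp
  have I2: "(A @ B, Q2) \<in> I (n - 1 - k)" unfolding mem_I dyck_bal
    using P Q lQ2 nkl lAB bal_append[OF P(6,7)] by simp
  have iZ: "length A \<in> Zs (A @ B)" unfolding Zs_def using height_prefix_bal[OF P(6)] by simp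
  have "((P1, Q1), ((A @ B, Q2), length A)) \<in> Sn n"
    unfolding Sn_def Sg_def using I1 I2 iZ nkl by force
  moreover have "psi ((P1, Q1), ((A @ B, Q2), length A)) = (P, Q)" using P Q by simp
  ultimately show ?thesis by force
qed

lemma psi_inj: "inj_on psi (Sn n)"
proof (rule inj_onI)
  fix t t' assume tS: "t \<in> Sn n" and t'S: "t' \<in> Sn n" and eq: "psi t = psi t'"
  obtain k P1 Q1 P2 Q2 i where t: "t = ((P1, Q1), ((P2, Q2), i))"
    and I1: "(P1, Q1) \<in> I k" and I2: "(P2, Q2) \<in> I (n - 1 - k)" and iZ: "i \<in> Zs P2"
    using tS unfolding Sn_def Sg_def by auto
  obtain k' P1' Q1' P2' Q2' i' where t': "t' = ((P1', Q1'), ((P2', Q2'), i'))"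
    and I1': "(P1', Q1') \<in> I k'" and I2': "(P2', Q2') \<in> I (n - 1 - k')" and iZ': "i' \<in> Zs P2'"
    using t'S unfolding Sn_def Sg_def by auto
  have b: "bal P1" "bal Q1" "bal P2" "bal Q2" "length P1 = length Q1"
    using I1 I2 unfolding mem_I dyck_bal by auto
  have b': "bal P1'" "bal Q1'" "bal P2'" "bal Q2'" "length P1' = length Q1'"
    using I1' I2' unfolding mem_I dyck_bal by auto
  have eqP: "P1 @ True # take i P2 @ False # drop i P2 = P1' @ True # take i' P2' @ False # drop i' P2'"
    and eqQ: "Q1 @ True # Q2 @ [False] = Q1' @ True # Q2' @ [False]"
    using eq t t' by simp_all
  have Qs: "Q1 = Q1'" "Q2 = Q2'" using lr_unique[OF eqQ b(2,4) b'(2,4)] by auto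
  have "length P1 = length P1'" using b(5) b'(5) Qs by simp
  then have P1s: "P1 = P1'" and rest: "take i P2 @ False # drop i P2 = take i' P2' @ False # drop i' P2'"
    using eqP by (simp_all add: append_eq_append_conv)
  have s1: "bal (take i P2)" "length (take i P2) = i" using split_Zs[OF b(3) iZ] by auto
  have s2: "bal (take i' P2')" "length (take i' P2') = i'" using split_Zs[OF b'(3) iZ'] by auto
  have "take i P2 = take i' P2' \<and> drop i P2 = drop i' P2'" using fr_unique[OF rest s1(1) s2(1)] .
  then have "P2 = P2'" "i = i'" using s1(2) s2(2) by (metis append_take_drop_id)+
  then show "t = t'" using t t' P1s Qs by simp
qed

lemma sum_I: "n \<ge> 1 \<Longrightarrow> sum f (I n) = sum (f \<circ> psi) (Sn n)"
proof -
  assume n: "n \<ge> 1"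
  have "psi ` Sn n = I n" using psi_into psi_onto[OF _ n] by auto
  then show ?thesis using sum.reindex[OF psi_inj, of f n] by simp
qed



definition Fc :: "real \<Rightarrow> nat \<Rightarrow> real" where
  "Fc x n = (\<Sum>p\<in>I n. x ^ contact (fst p))"

definition Hc :: "real \<Rightarrow> real \<Rightarrow> nat \<Rightarrow> real" where
  "Hc x s n = (\<Sum>p\<in>I n. x ^ contact (fst p) * hsum s (snd p))"

lemma F_nth: "fps_nth (F_gf x) n = Fc x n"
  unfolding F_gf_def Fc_def by (simp add: case_prod_beta)

lemma H_nth: "fps_nth (H_gf x s) n = Hc x s n"
  unfolding H_gf_def Hc_def
proof (simp add: case_prod_beta, rule sum.cong)
  fix p assume "p \<in> I n"
  then have "length (snd p) = 2 * n" unfolding tamari_intervals_def dyck_def by auto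
  then show "x ^ contact (fst p) * (\<Sum>i = 0..2 * n. s ^ nat (height (snd p) i)) = x ^ contact (fst p) * hsum s (snd p)"
    unfolding hsum_def by simp
qed simp

lemma Hc0: "Hc x s 0 = Fc x 0"
  unfolding Hc_def Fc_def
proof (rule sum.cong)
  fix p assume "p \<in> I 0"
  then have "snd p = []" unfolding tamari_intervals_def dyck_def by auto
  then show "x ^ contact (fst p) * hsum s (snd p) = x ^ contact (fst p)" unfolding hsum_def by simp
qed simp

definition G :: "real \<Rightarrow> bool list \<Rightarrow> real" where
  "G x P = (\<Sum>i\<in>Zs P. x ^ contact (drop i P))"

lemma G_eq: "bal P \<Longrightarrow> x \<noteq> 1 \<Longrightarrow> G x P = x / (x - 1) * (x ^ contact P - 1)"
proof -
  assume b: "bal P" and x: "x \<noteq> 1"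
  have "G x P = (\<Sum>j=1..contact P. x ^ j)" unfolding G_def using sum_contact_drop[OF b] .
  moreover have "(x - 1) * (\<Sum>j=1..contact P. x ^ j) = x * (x ^ contact P - 1)" by (rule geom)
  ultimately show ?thesis using x by (simp add: field_simps)
qed

lemma prod_sum:
  fixes a c :: "'p \<Rightarrow> real" and b d :: "'q \<Rightarrow> real" and s :: real
  assumes "finite A" "finite B"
  shows "(\<Sum>t\<in>A \<times> B. a (fst t) * b (snd t) + s * (c (fst t) * d (snd t)))
     = sum a A * sum b B + s * (sum c A * sum d B)"
proof -
  have "(\<Sum>t\<in>A \<times> B. a (fst t) * b (snd t) + s * (c (fst t) * d (snd t)))
     = (\<Sum>p\<in>A. \<Sum>q\<in>B. a p * b q + s * (c p * d q))"
    by (simp add: sum.cartesian_product case_prod_beta)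
  also have "\<dots> = (\<Sum>p\<in>A. \<Sum>q\<in>B. a p * b q) + s * (\<Sum>p\<in>A. \<Sum>q\<in>B. c p * d q)"
  proof -
    have e1: "(\<Sum>p\<in>A. \<Sum>q\<in>B. s * (c p * d q)) = s * (\<Sum>p\<in>A. \<Sum>q\<in>B. c p * d q)"
      by (simp add: sum_distrib_left)
    show ?thesis by (simp only: sum.distrib e1)
  qed
  also have "\<dots> = sum a A * sum b B + s * (sum c A * sum d B)"
    by (simp add: sum_product)
  finally show ?thesis .
qed

lemma sum_Sg:
  "(\<Sum>q\<in>Sg l. f (fst q) (snd q)) = (\<Sum>pq\<in>I l. \<Sum>i\<in>Zs (fst pq). f pq i)"
  unfolding Sg_def using finite_I by (subst sum.Sigma) (auto simp: case_prod_beta)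

lemma main_coeff:
  assumes n: "n \<ge> 1"
  shows "Hc x s n - Fc x n =
     (\<Sum>k<n. Hc x s k * (\<Sum>pq\<in>I (n - 1 - k). G x (fst pq)))
     + s * (\<Sum>k<n. Fc x k * (\<Sum>pq\<in>I (n - 1 - k). hsum s (snd pq) * G x (fst pq)))"
proof -
  define w where "w p = x ^ contact (fst p) * (hsum s (snd p) - 1)" for p
  define a where "a p = x ^ contact (fst p) * hsum s (snd p)" for p :: "bool list \<times> bool list"
  define c where "c p = x ^ contact (fst p)" for p :: "bool list \<times> bool list"
  define b where "b q = x ^ contact (drop (snd q) (fst (fst q)))" for q :: "(bool list \<times> bool list) \<times> nat"
  define d where "d q = hsum s (snd (fst q)) * x ^ contact (drop (snd q) (fst (fst q)))"
    for q :: "(bool list \<times> bool list) \<times> nat"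
  have "Hc x s n - Fc x n = sum w (I n)"
    unfolding Hc_def Fc_def w_def by (simp add: sum_subtractf algebra_simps)
  also have "\<dots> = sum (w \<circ> psi) (Sn n)" using sum_I[OF n] .
  also have "\<dots> = (\<Sum>k<n. sum (w \<circ> psi) (I k \<times> Sg (n - 1 - k)))"
    unfolding Sn_def
  proof (rule sum.UNION_disjoint)
    show "finite {..<n}" by simp
    show "\<forall>k\<in>{..<n}. finite (I k \<times> Sg (n - 1 - k))" using finite_I finite_Sg by auto
    show "\<forall>k\<in>{..<n}. \<forall>k'\<in>{..<n}. k \<noteq> k' \<longrightarrow> (I k \<times> Sg (n - 1 - k)) \<inter> (I k' \<times> Sg (n - 1 - k')) = {}"
    proof (intro ballI impI)
      fix k k' :: nat assume "k \<noteq> k'"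
      have "\<And>p. p \<in> I k \<Longrightarrow> length (fst p) = 2 * k" unfolding tamari_intervals_def dyck_def by auto
      moreover have "\<And>p. p \<in> I k' \<Longrightarrow> length (fst p) = 2 * k'" unfolding tamari_intervals_def dyck_def by auto
      ultimately have "I k \<inter> I k' = {}" using \<open>k \<noteq> k'\<close> by force
      then show "(I k \<times> Sg (n - 1 - k)) \<inter> (I k' \<times> Sg (n - 1 - k')) = {}" by blast
    qed
  qed
  also have "\<dots> = (\<Sum>k<n. sum a (I k) * sum b (Sg (n - 1 - k)) + s * (sum c (I k) * sum d (Sg (n - 1 - k))))"
  proof (rule sum.cong)
    fix k assume "k \<in> {..<n}"
    have "sum (w \<circ> psi) (I k \<times> Sg (n - 1 - k))
       = (\<Sum>t\<in>I k \<times> Sg (n - 1 - k). a (fst t) * b (snd t) + s * (c (fst t) * d (snd t)))"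
    proof (rule sum.cong)
      fix t assume t: "t \<in> I k \<times> Sg (n - 1 - k)"
      obtain P1 Q1 P2 Q2 i where tt: "t = ((P1, Q1), ((P2, Q2), i))" by (metis prod.collapse)
      have I1: "(P1, Q1) \<in> I k" and I2: "(P2, Q2) \<in> I (n - 1 - k)" and iZ: "i \<in> Zs P2"
        using t tt unfolding Sg_def by auto
      have bb: "bal P1" "bal Q1" "bal P2" "bal Q2" using I1 I2 unfolding mem_I dyck_bal by auto
      have ab: "bal (take i P2)" "bal (drop i P2)" using split_Zs[OF bb(3) iZ] by auto
      have cc: "contact (P1 @ True # take i P2 @ False # drop i P2) = contact P1 + contact (drop i P2)"
        using contact_decomp[OF bb(1) ab] .
      have hh: "hsum s (Q1 @ True # Q2 @ [False]) = hsum s Q1 + s * hsum s Q2 + 1"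
        using hsum_decomp[OF bb(2,4)] .
      show "(w \<circ> psi) t = a (fst t) * b (snd t) + s * (c (fst t) * d (snd t))"
        unfolding tt w_def a_def b_def c_def d_def using cc hh
        by (simp add: power_add algebra_simps)
    qed simp
    also have "\<dots> = sum a (I k) * sum b (Sg (n - 1 - k)) + s * (sum c (I k) * sum d (Sg (n - 1 - k)))"
      by (rule prod_sum) (simp_all add: finite_I finite_Sg)
    finally show "sum (w \<circ> psi) (I k \<times> Sg (n - 1 - k)) = sum a (I k) * sum b (Sg (n - 1 - k)) + s * (sum c (I k) * sum d (Sg (n - 1 - k)))" .
  qed simp
  also have "\<dots> = (\<Sum>k<n. Hc x s k * (\<Sum>pq\<in>I (n - 1 - k). G x (fst pq))
       + s * (Fc x k * (\<Sum>pq\<in>I (n - 1 - k). hsum s (snd pq) * G x (fst pq))))"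
  proof (rule sum.cong)
    fix k
    have "sum a (I k) = Hc x s k" unfolding a_def Hc_def ..
    moreover have "sum c (I k) = Fc x k" unfolding c_def Fc_def ..
    moreover have "sum b (Sg (n - 1 - k)) = (\<Sum>pq\<in>I (n - 1 - k). G x (fst pq))"
      unfolding b_def G_def using sum_Sg[of "\<lambda>pq i. x ^ contact (drop i (fst pq))"] by simp
    moreover have "sum d (Sg (n - 1 - k)) = (\<Sum>pq\<in>I (n - 1 - k). hsum s (snd pq) * G x (fst pq))"
      unfolding d_def G_def using sum_Sg[of "\<lambda>pq i. hsum s (snd pq) * x ^ contact (drop i (fst pq))"]
      by (simp add: sum_distrib_left)
    ultimately show "sum a (I k) * sum b (Sg (n - 1 - k)) + s * (sum c (I k) * sum d (Sg (n - 1 - k)))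
      = Hc x s k * (\<Sum>pq\<in>I (n - 1 - k). G x (fst pq))
       + s * (Fc x k * (\<Sum>pq\<in>I (n - 1 - k). hsum s (snd pq) * G x (fst pq)))" by simp
  qed simp
  finally show ?thesis by (simp add: sum.distrib sum_distrib_left)
qed

lemma sumG1: "x \<noteq> 1 \<Longrightarrow> (\<Sum>pq\<in>I l. G x (fst pq)) = x / (x - 1) * (Fc x l - Fc 1 l)"
proof -
  assume x: "x \<noteq> 1"
  have "(\<Sum>pq\<in>I l. G x (fst pq)) = (\<Sum>pq\<in>I l. x / (x - 1) * (x ^ contact (fst pq) - 1))"
  proof (rule sum.cong)
    fix pq assume "pq \<in> I l"
    then have "bal (fst pq)" unfolding tamari_intervals_def dyck_bal by auto
    then show "G x (fst pq) = x / (x - 1) * (x ^ contact (fst pq) - 1)" using G_eq x by simp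
  qed simp
  also have "\<dots> = x / (x - 1) * (\<Sum>pq\<in>I l. x ^ contact (fst pq) - 1)"
    by (rule sum_distrib_left[symmetric])
  also have "(\<Sum>pq\<in>I l. x ^ contact (fst pq) - 1) = Fc x l - Fc 1 l"
    unfolding Fc_def by (simp add: sum_subtractf)
  finally show ?thesis .
qed

lemma sumG2: "x \<noteq> 1 \<Longrightarrow> (\<Sum>pq\<in>I l. hsum s (snd pq) * G x (fst pq)) = x / (x - 1) * (Hc x s l - Hc 1 s l)"
proof -
  assume x: "x \<noteq> 1"
  have "(\<Sum>pq\<in>I l. hsum s (snd pq) * G x (fst pq)) = (\<Sum>pq\<in>I l. x / (x - 1) * (x ^ contact (fst pq) * hsum s (snd pq) - 1 ^ contact (fst pq) * hsum s (snd pq)))"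
  proof (rule sum.cong)
    fix pq assume "pq \<in> I l"
    then have "bal (fst pq)" unfolding tamari_intervals_def dyck_bal by auto
    then have g: "G x (fst pq) = x / (x - 1) * (x ^ contact (fst pq) - 1)" using G_eq x by blast
    have x1: "x - 1 \<noteq> 0" using x by simp
    show "hsum s (snd pq) * G x (fst pq) = x / (x - 1) * (x ^ contact (fst pq) * hsum s (snd pq) - 1 ^ contact (fst pq) * hsum s (snd pq))"
      unfolding g using x1 by (simp add: field_simps)
  qed simp
  also have "\<dots> = x / (x - 1) * (Hc x s l - Hc 1 s l)"
    unfolding Hc_def by (simp only: sum_distrib_left[symmetric] sum_subtractf)
  finally show ?thesis .
qed



lemma nth_aux: "fps_nth (fps_X * (fps_const (c::real) * (A * B))) n
   = (if n = 0 then 0 else c * (\<Sum>i=0..n - 1. fps_nth A i * fps_nth B (n - 1 - i)))"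
  by (simp only: fps_X_mult_nth fps_mult_left_const_nth) (simp add: fps_mult_nth)

theorem proposition2p2:
  fixes x s :: real
  assumes "x \<noteq> 1"
  shows "H_gf x s = F_gf x
     + fps_const (s * x) * fps_X * F_gf x * fps_const (1 / (x - 1)) * (H_gf x s - H_gf 1 s)
     + fps_const x * fps_X * H_gf x s * fps_const (1 / (x - 1)) * (F_gf x - F_gf 1)"
proof (rule fps_ext)
  fix n
  have c1: "fps_const (s * x / (x - 1)) = fps_const (s * x) * fps_const (1 / (x - 1))"
    by (simp add: fps_const_mult)
  have c2: "fps_const (x / (x - 1)) = fps_const x * fps_const (1 / (x - 1))"
    by (simp add: fps_const_mult)
  have r1: "fps_const (s * x) * fps_X * F_gf x * fps_const (1 / (x - 1)) * (H_gf x s - H_gf 1 s)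
      = fps_X * (fps_const (s * x / (x - 1)) * (F_gf x * (H_gf x s - H_gf 1 s)))"
    unfolding c1 by (simp only: mult.assoc mult.commute mult.left_commute)
  have r2: "fps_const x * fps_X * H_gf x s * fps_const (1 / (x - 1)) * (F_gf x - F_gf 1)
      = fps_X * (fps_const (x / (x - 1)) * (H_gf x s * (F_gf x - F_gf 1)))"
    unfolding c2 by (simp only: mult.assoc mult.commute mult.left_commute)
  have rhs: "fps_nth (F_gf x
     + fps_const (s * x) * fps_X * F_gf x * fps_const (1 / (x - 1)) * (H_gf x s - H_gf 1 s)
     + fps_const x * fps_X * H_gf x s * fps_const (1 / (x - 1)) * (F_gf x - F_gf 1)) n
     = Fc x n + (if n = 0 then 0 else s * x / (x - 1) * (\<Sum>i=0..n - 1. Fc x i * (Hc x s (n - 1 - i) - Hc 1 s (n - 1 - i))))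
       + (if n = 0 then 0 else x / (x - 1) * (\<Sum>i=0..n - 1. Hc x s i * (Fc x (n - 1 - i) - Fc 1 (n - 1 - i))))"
    unfolding r1 r2 fps_add_nth nth_aux by (simp add: F_nth H_nth)
  show "fps_nth (H_gf x s) n = fps_nth (F_gf x
     + fps_const (s * x) * fps_X * F_gf x * fps_const (1 / (x - 1)) * (H_gf x s - H_gf 1 s)
     + fps_const x * fps_X * H_gf x s * fps_const (1 / (x - 1)) * (F_gf x - F_gf 1)) n"
  proof (cases n)
    case 0 then show ?thesis unfolding rhs by (simp add: H_nth Hc0)
  next
    case (Suc m)
    have mc: "Hc x s (Suc m) - Fc x (Suc m) =
      (\<Sum>k<Suc m. Hc x s k * (x / (x - 1) * (Fc x (m - k) - Fc 1 (m - k))))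
      + s * (\<Sum>k<Suc m. Fc x k * (x / (x - 1) * (Hc x s (m - k) - Hc 1 s (m - k))))"
      using main_coeff[of "Suc m" x s] sumG1[OF assms] sumG2[OF assms] by simp
    have A: "(\<Sum>k<Suc m. Hc x s k * (x / (x - 1) * (Fc x (m - k) - Fc 1 (m - k))))
      = x / (x - 1) * (\<Sum>i=0..m. Hc x s i * (Fc x (m - i) - Fc 1 (m - i)))"
      by (simp add: sum_distrib_left atLeast0AtMost lessThan_Suc_atMost mult_ac)
    have B: "s * (\<Sum>k<Suc m. Fc x k * (x / (x - 1) * (Hc x s (m - k) - Hc 1 s (m - k))))
      = s * x / (x - 1) * (\<Sum>i=0..m. Fc x i * (Hc x s (m - i) - Hc 1 s (m - i)))"
      by (simp add: sum_distrib_left atLeast0AtMost lessThan_Suc_atMost mult_ac)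
    show ?thesis unfolding rhs using mc A B Suc by (simp add: H_nth)
  qed
qed


end
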